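(* Let $\mu,\nu\in\mathcal{P}(\mathcal{X})$, $0<m_1\le m_2<\infty$, $K:\mathcal{X}\times\mathcal{X}\to(0,1]$ measurable, and let $(\alpha_1,\tilde\alpha_1)$, $(\alpha_2,\tilde\alpha_2)$ be pairs of tail functions (with $\mu(B_{m_1})>0$, $\nu(B_{m_1})>0$, $\alpha_1,\alpha_2>0$). Assume $\int g\,d\nu>0$ for all $g\in\mathcal{G}^{\nu}_{\alpha_2,\tilde\alpha_2}\setminus\{0\}$ and \[ \inf_{f\in\mathcal{F}^{\mu,norm}_{\alpha_1,\tilde\alpha_1}}\inf_{g\in\mathcal{G}^{\nu,norm}_{\alpha_2,\tilde\alpha_2}}\int L_{K^\top,\nu}(g)f\,d\mu>0,\qquad \sup_{f\in\mathcal{F}^{\mu,norm}_{\alpha_1,\tilde\alpha_1}}\sup_{g\in\mathcal{G}^{\nu,norm}_{\alpha_2,\tilde\alpha_2}}\int L_{K^\top,\nu}(g)f\,d\mu<\infty . \] Then $L_{K^\top,\nu}$ is a strict contraction from $(\mathcal{G}^{\nu}_{\alpha_2,\tilde\alpha_2}\setminus\{0\},d_{\mathcal{G}^{\nu}_{\alpha_2,\tilde\alpha_2}})$ into $(\mathcal{G}^{\mu}_{\alpha_1,\tilde\alpha_1},d_{\mathcal{G}^{\mu}_{\alpha_1,\tilde\alpha_1}})$, i.e., there is $\kappa\in(0,1)$ with $d_{\mathcal{G}^{\mu}_{\alpha_1,\tilde\alpha_1}}(L_{K^\top,\nu}g,L_{K^\top,\nu}\tilde g)\le\kappa\, d_{\mathcal{G}^{\nu}_{\alpha_2,\tilde\alpha_2}}(g,\tilde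 g)$ for all $g,\tilde g\in\mathcal{G}^{\nu}_{\alpha_2,\tilde\alpha_2}\setminus\{0\}$.
   Context: $\mathcal{X}$ is a Polish space with metric $d_{\mathcal{X}}$, $x_0$ fixed, $B_r=\{x:d_{\mathcal{X}}(x_0,x)\le r\}$, $B_r^{\mathsf c}=\mathcal{X}\setminus B_r$. $L_{K^\top,\nu}g(x)=\int K(y,x)g(y)\,\nu(dy)$. A tail function is a non-increasing $\alpha:(0,\infty)\to[0,\infty)$ with $\lim_{r\to\infty}\alpha(r)=0$. For $\rho\in\mathcal{P}(\mathcal{X})$: $\mathcal{F}^{\rho}_{\alpha,\tilde\alpha}$ is the set of $f\in L^2(\rho)$ with $f\mathbf 1_{B_{m_2}}\ge0$ $\rho$-a.s., $\int_{B_r^{\mathsf c}}f_+\,d\rho\le\alpha(r)\int f\,d\rho$ for all $r\ge m_1$, $\int_{B_r^{\mathsf c}}f_-\,d\rho\le\tilde\alpha(r)\int f\,d\rho$ for all $r\ge m_2$; $\mathcal{G}^{\rho}_{\alpha,\tilde\alpha}=\{g\in L^2(\rho):\int fg\,d\rho\ge0\ \forall f\in\mathcal{F}^{\rho}_{\alpha,\tilde\alpha}\}$; superscript $norm$ denotes elements with $\int\cdot\,d\rho=1$. Hilbert's metric for a cone $C$: $f\le_C g$ iff $g-f\in C$; $f\sim_C g$ iff $f\le_C bg$ and $g\le_C b'f$ for some $b,b'>0$; $M(f,g)=\inf\{b>0:bg-f\in C\}$, $m(f,g)=\sup\{a>0:f-ag\in C\}$; $d_C(f,g)=\log(M/m)$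 if $f\sim_C g$, $g\ne0$, and $\infty$ otherwise. *)

theory Defs
  imports "HOL-Probability.Probability"
begin

definition Bclosed :: "'a::metric_space \<Rightarrow> real \<Rightarrow> 'a set" where
  "Bclosed x0 r = {x. dist x0 x \<le> r}"

definition tail_fun :: "(real \<Rightarrow> real) \<Rightarrow> bool" where
  "tail_fun \<alpha> \<longleftrightarrow> (\<forall>r s. 0 < r \<longrightarrow> r \<le> s \<longrightarrow> \<alpha> s \<le> \<alpha> r)
     \<and> (\<forall>r>0. 0 \<le> \<alpha> r) \<and> (\<alpha> \<longlongrightarrow> 0) at_top"

text \<open>Membership in L^2(rho) (for functions; cones below are closed under a.e. equality).\<close>
definition L2 :: "'a measure \<Rightarrow> ('a \<Rightarrow> real) \<Rightarrow> bool" where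
  "L2 \<rho> f \<longleftrightarrow> f \<in> borel_measurable \<rho> \<and> integrable \<rho> (\<lambda>x. (f x)\<^sup>2)"

definition Fcone :: "'a::metric_space \<Rightarrow> real \<Rightarrow> real \<Rightarrow> 'a measure \<Rightarrow> (real \<Rightarrow> real) \<Rightarrow> (real \<Rightarrow> real)
    \<Rightarrow> ('a \<Rightarrow> real) set" where
  "Fcone x0 m1 m2 \<rho> \<alpha> \<alpha>' = {f. L2 \<rho> f
     \<and> (AE x in \<rho>. x \<in> Bclosed x0 m2 \<longrightarrow> 0 \<le> f x)
     \<and> (\<forall>r\<ge>m1. (\<integral>x\<in>(space \<rho> - Bclosed x0 r). max (f x) 0 \<partial>\<rho>) \<le> \<alpha> r * (\<integral>x. f x \<partial>\<rho>))
     \<and> (\<forall>r\<ge>m2. (\<integral>x\<in>(space \<rho> - Bclosed x0 r). max (- f x) 0 \<partial>\<rho>) \<le> \<alpha>' r * (\<integral>x. f x \<partial>\<rho>))}"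

definition Gcone :: "'a::metric_space \<Rightarrow> real \<Rightarrow> real \<Rightarrow> 'a measure \<Rightarrow> (real \<Rightarrow> real) \<Rightarrow> (real \<Rightarrow> real)
    \<Rightarrow> ('a \<Rightarrow> real) set" where
  "Gcone x0 m1 m2 \<rho> \<alpha> \<alpha>' = {g. L2 \<rho> g
     \<and> (\<forall>f\<in>Fcone x0 m1 m2 \<rho> \<alpha> \<alpha>'. 0 \<le> (\<integral>x. f x * g x \<partial>\<rho>))}"

definition normed :: "'a measure \<Rightarrow> ('a \<Rightarrow> real) set \<Rightarrow> ('a \<Rightarrow> real) set" where
  "normed \<rho> C = {f\<in>C. (\<integral>x. f x \<partial>\<rho>) = 1}"

definition nonzero :: "'a measure \<Rightarrow> ('a \<Rightarrow> real) set \<Rightarrow> ('a \<Rightarrow> real) set" where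
  "nonzero \<rho> C = {g\<in>C. \<not> (AE x in \<rho>. g x = 0)}"

definition LKT :: "('a \<Rightarrow> 'a \<Rightarrow> real) \<Rightarrow> 'a measure \<Rightarrow> ('a \<Rightarrow> real) \<Rightarrow> 'a \<Rightarrow> real" where
  "LKT K \<nu> g = (\<lambda>x. \<integral>y. K y x * g y \<partial>\<nu>)"

definition cone_le :: "('a \<Rightarrow> real) set \<Rightarrow> ('a \<Rightarrow> real) \<Rightarrow> ('a \<Rightarrow> real) \<Rightarrow> bool" where
  "cone_le C f g \<longleftrightarrow> (\<lambda>x. g x - f x) \<in> C"

definition cone_equiv :: "('a \<Rightarrow> real) set \<Rightarrow> ('a \<Rightarrow> real) \<Rightarrow> ('a \<Rightarrow> real) \<Rightarrow> bool" where
  "cone_equiv C f g \<longleftrightarrow> (\<exists>b>0. \<exists>b'>0. cone_le C f (\<lambda>x. b * g x) \<and> cone_le C g (\<lambda>x. b' * f x))"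

definition hM :: "('a \<Rightarrow> real) set \<Rightarrow> ('a \<Rightarrow> real) \<Rightarrow> ('a \<Rightarrow> real) \<Rightarrow> real" where
  "hM C f g = Inf {b. b > 0 \<and> (\<lambda>x. b * g x - f x) \<in> C}"

definition hm :: "('a \<Rightarrow> real) set \<Rightarrow> ('a \<Rightarrow> real) \<Rightarrow> ('a \<Rightarrow> real) \<Rightarrow> real" where
  "hm C f g = Sup {a. a > 0 \<and> (\<lambda>x. f x - a * g x) \<in> C}"

definition hilbert_dist :: "'a measure \<Rightarrow> ('a \<Rightarrow> real) set \<Rightarrow> ('a \<Rightarrow> real) \<Rightarrow> ('a \<Rightarrow> real) \<Rightarrow> ereal" where
  "hilbert_dist \<rho> C f g =
     (if cone_equiv C f g \<and> \<not> (AE x in \<rho>. g x = 0) then ereal (ln (hM C f g / hm C f g)) else \<infinity>)"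

end

theory Submission
  imports Defs
begin

lemma core_ineq:
  fixes x y k r :: real
  assumes "0 < x" "0 < y" "0 \<le> k" "(1-k)*x \<le> y" "1 \<le> r"
  shows "ln(1+x*r) - ln(1+y*r) - k * ln r \<le> ln(1+x) - ln(1+y)"
proof -
  define phi where "phi = (\<lambda>z::real. ln(1+x*z) - ln(1+y*z) - k * ln z)"
  have "phi r \<le> phi 1"
  proof (rule DERIV_nonpos_imp_nonincreasing[of 1 r phi])
    fix z :: real assume z: "1 \<le> z" "z \<le> r"
    have p1: "0 < 1+x*z" "0 < 1+y*z" using assms z by (auto intro!: add_pos_nonneg)
    have d: "DERIV phi z :> x/(1+x*z) - y/(1+y*z) - k/z"
      unfolding phi_def using p1 z by (auto intro!: derivative_eq_intros)
    have h1: "z*(x-y) \<le> k*(x*z)"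
    proof -
      have "x - y \<le> k*x" using assms(4) by (simp add: algebra_simps)
      then have "z*(x-y) \<le> z*(k*x)" using z by (intro mult_left_mono) auto
      then show ?thesis by (simp add: algebra_simps)
    qed
    have "x*z \<le> (1+x*z)*(1+y*z)"
    proof -
      have "0 \<le> (1+x*z)*(y*z)" using p1 assms z by auto
      then show ?thesis by (simp add: algebra_simps)
    qed
    then have h2: "k*(x*z) \<le> k*((1+x*z)*(1+y*z))" using assms by (intro mult_left_mono) auto
    have e: "x/(1+x*z) - y/(1+y*z) = (x-y)/((1+x*z)*(1+y*z))"
      using p1 by (simp add: field_simps)
    have P: "0 < (1+x*z)*(1+y*z)" using p1 by auto
    have "x - y \<le> k*((1+x*z)*(1+y*z)) / z"
    proof -
      have "z*(x-y) \<le> k*((1+x*z)*(1+y*z))" using h1 h2 by linarith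
      then show ?thesis using z by (simp add: le_divide_eq mult.commute)
    qed
    then have "(x-y)/((1+x*z)*(1+y*z)) \<le> k/z"
      using P z by (simp add: divide_le_eq mult.commute)
    then have "x/(1+x*z) - y/(1+y*z) - k/z \<le> 0" unfolding e by simp
    then show "\<exists>y. DERIV phi z :> y \<and> y \<le> 0" using d by blast
  qed (rule assms)
  then show ?thesis unfolding phi_def by simp
qed

lemma birk_ineq:
  fixes c1 c2 t w a b :: real
  assumes "0 < c1" "c1 \<le> c2" "0 \<le> t" "0 \<le> w" "0 < t + w" "0 < a" "a \<le> b"
  shows "ln ((a*c1*w + b*c2*t)/(c1*w + c2*t)) - ln ((a*c2*w + b*c1*t)/(c2*w + c1*t))
     \<le> (1 - c1\<^sup>2/(2*c2\<^sup>2)) * (ln b - ln a)"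
proof -
  define k where "k = 1 - c1\<^sup>2/(2*c2\<^sup>2)"
  have c2: "0 < c2" using assms by auto
  have "c1\<^sup>2 \<le> c2\<^sup>2" using assms by (intro power_mono) auto
  then have "c1\<^sup>2/(2*c2\<^sup>2) \<le> 1/2" using c2 by (simp add: field_simps)
  then have k0: "0 \<le> k" unfolding k_def by linarith
  have lnab: "0 \<le> ln b - ln a" using assms by auto
  have rhs0: "0 \<le> k * (ln b - ln a)" using k0 lnab by auto
  show ?thesis
  proof (cases "w = 0")
    case True
    then have "t > 0" using assms by auto
    then show ?thesis using True rhs0 assms c2 unfolding k_def by simp
  next
    case w: False
    show ?thesis
    proof (cases "t = 0")
      case True
      then show ?thesis using w rhs0 assms c2 unfolding k_def by simp
    next
      case t: False
      have wp: "0 < w" and tp: "0 < t" using w t assms by auto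
      define x where "x = c2*t/(c1*w)"
      define y where "y = c1*t/(c2*w)"
      define r where "r = b/a"
      have xp: "0 < x" and yp: "0 < y" unfolding x_def y_def using wp tp assms c2 by auto
      have r1: "1 \<le> r" unfolding r_def using assms by auto
      have "(1-k)*x = y/2" unfolding k_def x_def y_def using assms c2 wp
        by (simp add: field_simps power2_eq_square)
      then have kxy: "(1-k)*x \<le> y" using yp by linarith
      have e1: "1+x*r = (a*c1*w + b*c2*t)/(a*c1*w)" "1+x = (c1*w+c2*t)/(c1*w)"
        unfolding x_def r_def using assms c2 wp tp by (simp_all add: field_simps)
      have e2: "1+y*r = (a*c2*w + b*c1*t)/(a*c2*w)" "1+y = (c2*w+c1*t)/(c2*w)"
        unfolding y_def r_def using assms c2 wp tp by (simp_all add: field_simps)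
      have d1: "c1 * w + c2 * t > 0" "a * (c1 * (c1 * (w * w))) + a * (c1 * (c2 * (t * w))) > 0"
        "c1 * t + c2 * w > 0" "a * (c1 * (c2 * (t * w))) + a * (c2 * (c2 * (w * w))) > 0"
        using assms c2 wp tp by (auto intro!: add_pos_pos mult_pos_pos)
      have eb: "(a*c1*w + b*c2*t)/(c1*w + c2*t) = a * ((1+x*r)/(1+x))"
        unfolding e1 using assms c2 wp tp
        apply (simp add: field_simps)
        apply (subst frac_eq_eq)
        using d1 apply linarith
        using d1 apply linarith
        apply (simp add: algebra_simps)
        done
      have ea: "(a*c2*w + b*c1*t)/(c2*w + c1*t) = a * ((1+y*r)/(1+y))"
        unfolding e2 using assms c2 wp tp
        apply (simp add: field_simps)
        apply (subst frac_eq_eq)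
        using d1 apply linarith
        using d1 apply linarith
        apply (simp add: algebra_simps)
        done
      have pos: "0 < 1+x*r" "0 < 1+y*r" "0 < 1+x" "0 < 1+y" using xp yp r1 by (auto intro!: add_pos_nonneg)
      have "ln (a * ((1+x*r)/(1+x))) - ln (a * ((1+y*r)/(1+y)))
          = ln(1+x*r) - ln(1+y*r) - (ln(1+x) - ln(1+y))"
        using pos assms by (simp add: ln_mult ln_div)
      also have "\<dots> \<le> k * ln r" using core_ineq[OF xp yp k0 kxy r1] by linarith
      also have "ln r = ln b - ln a" unfolding r_def using assms by (simp add: ln_div)
      finally show ?thesis unfolding eb ea k_def .
    qed
  qed
qed


lemma L2_integrable:
  assumes "prob_space \<rho>" "L2 \<rho> f" shows "integrable \<rho> f"
proof -
  interpret prob_space \<rho> by fact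
  have m: "f \<in> borel_measurable \<rho>" "integrable \<rho> (\<lambda>x. (f x)\<^sup>2)" using assms(2) unfolding L2_def by auto
  have h: "integrable \<rho> (\<lambda>x. 1 + (f x)\<^sup>2)" using m by auto
  have nb: "norm (f x) \<le> norm (1 + (f x)\<^sup>2)" for x
  proof -
    have "\<bar>f x\<bar> \<le> 1 + (f x)\<^sup>2"
    proof (cases "\<bar>f x\<bar> \<le> 1")
      case True
      then show ?thesis using zero_le_power2[of "f x"] by linarith
    next
      case False
      then have "\<bar>f x\<bar> * 1 \<le> \<bar>f x\<bar> * \<bar>f x\<bar>" by (intro mult_left_mono) auto
      then show ?thesis by (simp add: power2_eq_square)
    qed
    then show ?thesis by simp
  qed
  show ?thesis
    by (rule Bochner_Integration.integrable_bound[OF h m(1)]) (rule AE_I2, rule nb)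
qed

lemma L2_bounded:
  assumes "prob_space \<rho>" "f \<in> borel_measurable \<rho>" "\<And>x. \<bar>f x\<bar> \<le> C" shows "L2 \<rho> f"
proof -
  interpret prob_space \<rho> by fact
  have "integrable \<rho> (\<lambda>x. (f x)\<^sup>2)"
  proof (rule integrable_const_bound[where B="C\<^sup>2"])
    have "norm ((f x)\<^sup>2) \<le> C\<^sup>2" for x
    proof -
      have "\<bar>f x\<bar>\<^sup>2 \<le> C\<^sup>2" using assms(3)[of x] by (intro power_mono) auto
      then show ?thesis by simp
    qed
    then show "AE x in \<rho>. norm ((f x)\<^sup>2) \<le> C\<^sup>2" by (intro AE_I2)
  qed (use assms(2) in auto)
  then show ?thesis using assms(2) unfolding L2_def by auto
qed

lemma L2_scale:
  assumes "L2 \<rho> f" shows "L2 \<rho> (\<lambda>x. c * f x)"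
proof -
  have fm[measurable]: "f \<in> borel_measurable \<rho>" using assms unfolding L2_def by auto
  have "integrable \<rho> (\<lambda>x. c\<^sup>2 * (f x)\<^sup>2)" using assms unfolding L2_def by auto
  moreover have "(\<lambda>x. c * f x) \<in> borel_measurable \<rho>" by measurable
  ultimately show ?thesis unfolding L2_def by (simp add: power_mult_distrib)
qed

lemma Bclosed_sets:
  assumes "sets \<rho> = sets borel" shows "Bclosed x0 r \<in> sets \<rho>"
proof -
  have "Bclosed x0 r = cball x0 r" by (auto simp: Bclosed_def cball_def)
  then show ?thesis using assms by simp
qed

lemma Fcone_nonneg:
  assumes P: "prob_space \<rho>" and S: "sets \<rho> = sets borel" and T: "tail_fun \<alpha>'" and m: "0 < m2"
    and f: "f \<in> Fcone x0 m1 m2 \<rho> \<alpha> \<alpha>'"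
  shows "0 \<le> (\<integral>x. f x \<partial>\<rho>)" and "(\<integral>x. f x \<partial>\<rho>) = 0 \<Longrightarrow> AE x in \<rho>. f x = 0"
proof -
  have L: "L2 \<rho> f" and aeB: "AE x in \<rho>. x \<in> Bclosed x0 m2 \<longrightarrow> 0 \<le> f x"
    and tl: "(\<integral>x\<in>(space \<rho> - Bclosed x0 m2). max (- f x) 0 \<partial>\<rho>) \<le> \<alpha>' m2 * (\<integral>x. f x \<partial>\<rho>)"
    using f unfolding Fcone_def by auto
  have int: "integrable \<rho> f" using L2_integrable[OF P L] .
  have a0: "0 \<le> \<alpha>' m2" using T m unfolding tail_fun_def by auto
  define Sc where "Sc = space \<rho> - Bclosed x0 m2"
  have Sc: "Sc \<in> sets \<rho>" unfolding Sc_def using Bclosed_sets[OF S] by auto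
  define h where "h x = indicator Sc x *\<^sub>R max (- f x) 0" for x
  have hint: "integrable \<rho> h" unfolding h_def using int Sc by (intro integrable_mult_indicator) auto
  have hnn: "AE x in \<rho>. 0 \<le> h x" unfolding h_def by (auto intro!: AE_I2 split: split_indicator)
  have key: "AE x in \<rho>. 0 \<le> f x" if le: "(\<integral>x. f x \<partial>\<rho>) \<le> 0"
  proof -
    have "(\<integral>x. h x \<partial>\<rho>) \<le> 0"
    proof -
      have "(\<integral>x. h x \<partial>\<rho>) = (\<integral>x\<in>Sc. max (- f x) 0 \<partial>\<rho>)"
        unfolding h_def set_lebesgue_integral_def by simp
      also have "\<dots> \<le> \<alpha>' m2 * (\<integral>x. f x \<partial>\<rho>)" using tl unfolding Sc_def .
      also have "\<dots> \<le> 0" using a0 le by (simp add: mult_nonneg_nonpos)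
      finally show ?thesis .
    qed
    moreover have "0 \<le> (\<integral>x. h x \<partial>\<rho>)" using hnn by (rule integral_nonneg_AE)
    ultimately have "(\<integral>x. h x \<partial>\<rho>) = 0" by linarith
    then have "AE x in \<rho>. h x = 0" using integral_nonneg_eq_0_iff_AE[OF hint hnn] by simp
    then show ?thesis using aeB AE_space
      by eventually_elim (auto simp: h_def Sc_def split: split_indicator if_splits)
  qed
  show nn: "0 \<le> (\<integral>x. f x \<partial>\<rho>)"
  proof (rule ccontr)
    assume "\<not> 0 \<le> (\<integral>x. f x \<partial>\<rho>)"
    then have "AE x in \<rho>. 0 \<le> f x" using key by auto
    then have "0 \<le> (\<integral>x. f x \<partial>\<rho>)" by (rule integral_nonneg_AE)
    with \<open>\<not> 0 \<le> (\<integral>x. f x \<partial>\<rho>)\<close> show False by simp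
  qed
  assume z: "(\<integral>x. f x \<partial>\<rho>) = 0"
  then have "AE x in \<rho>. 0 \<le> f x" using key by auto
  then show "AE x in \<rho>. f x = 0" using integral_nonneg_eq_0_iff_AE[OF int] z by simp
qed

lemma max_scale: "0 < (c::real) \<Longrightarrow> max (c * u) 0 = c * max u 0"
  by (cases "u \<ge> 0") (auto simp: max_def mult_le_0_iff)

lemma Fcone_scale:
  assumes c: "0 < c" and f: "f \<in> Fcone x0 m1 m2 \<rho> \<alpha> \<alpha>'"
  shows "(\<lambda>x. c * f x) \<in> Fcone x0 m1 m2 \<rho> \<alpha> \<alpha>'"
proof -
  have L: "L2 \<rho> f" and aeB: "AE x in \<rho>. x \<in> Bclosed x0 m2 \<longrightarrow> 0 \<le> f x"
    and t1: "\<And>r. r \<ge> m1 \<Longrightarrow> (\<integral>x\<in>(space \<rho> - Bclosed x0 r). max (f x) 0 \<partial>\<rho>) \<le> \<alpha> r * (\<integral>x. f x \<partial>\<rho>)"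
    and t2: "\<And>r. r \<ge> m2 \<Longrightarrow> (\<integral>x\<in>(space \<rho> - Bclosed x0 r). max (- f x) 0 \<partial>\<rho>) \<le> \<alpha>' r * (\<integral>x. f x \<partial>\<rho>)"
    using f unfolding Fcone_def by auto
  have e1: "max (c * f x) 0 = c * max (f x) 0" for x using max_scale[OF c] .
  have e2: "max (- (c * f x)) 0 = c * max (- f x) 0" for x using max_scale[OF c, of "- f x"] by simp
  show ?thesis unfolding Fcone_def
  proof (intro CollectI conjI allI impI)
    show "L2 \<rho> (\<lambda>x. c * f x)" using L2_scale[OF L] .
    show "AE x in \<rho>. x \<in> Bclosed x0 m2 \<longrightarrow> 0 \<le> c * f x" using aeB by eventually_elim (use c in auto)
  next
    fix r :: real assume r: "m1 \<le> r"
    show "(\<integral>x\<in>(space \<rho> - Bclosed x0 r). max (c * f x) 0 \<partial>\<rho>) \<le> \<alpha> r * (\<integral>x. c * f x \<partial>\<rho>)"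
      unfolding e1 using t1[OF r] c by (simp add: mult_left_mono algebra_simps)
  next
    fix r :: real assume r: "m2 \<le> r"
    show "(\<integral>x\<in>(space \<rho> - Bclosed x0 r). max (- (c * f x)) 0 \<partial>\<rho>) \<le> \<alpha>' r * (\<integral>x. c * f x \<partial>\<rho>)"
      unfolding e2 using t2[OF r] c by (simp add: mult_left_mono algebra_simps)
  qed
qed

lemma Gcone_scale:
  assumes c: "0 \<le> c" and g: "g \<in> Gcone x0 m1 m2 \<rho> \<alpha> \<alpha>'"
  shows "(\<lambda>x. c * g x) \<in> Gcone x0 m1 m2 \<rho> \<alpha> \<alpha>'"
proof -
  have "(\<integral>x. f x * (c * g x) \<partial>\<rho>) = c * (\<integral>x. f x * g x \<partial>\<rho>)" for f
  proof -
    have "(\<lambda>x. f x * (c * g x)) = (\<lambda>x. c * (f x * g x))" by (auto simp: algebra_simps)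
    then show ?thesis by simp
  qed
  then show ?thesis using g c unfolding Gcone_def by (auto intro!: L2_scale)
qed


locale kern =
  fixes \<nu> :: "'a::polish_space measure" and K :: "'a \<Rightarrow> 'a \<Rightarrow> real"
  assumes Pn: "prob_space \<nu>" and Sn: "sets \<nu> = sets borel"
    and Km: "(\<lambda>(x, y). K x y) \<in> borel_measurable (borel \<Otimes>\<^sub>M borel)"
    and Kb: "\<And>x y. 0 < K x y \<and> K x y \<le> 1"
begin

lemma K_meas: "(\<lambda>y. K y x) \<in> borel_measurable \<nu>"
proof -
  note Km[measurable]
  have "(\<lambda>y. K y x) \<in> borel_measurable borel" by measurable
  then show ?thesis using measurable_cong_sets[OF Sn refl] by blast
qed

lemma LKT_int: assumes "integrable \<nu> g" shows "integrable \<nu> (\<lambda>y. K y x * g y)"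
proof (rule Bochner_Integration.integrable_bound[OF integrable_abs[OF assms]])
  have "g \<in> borel_measurable \<nu>" using assms by auto
  then show "(\<lambda>y. K y x * g y) \<in> borel_measurable \<nu>" using K_meas by (intro borel_measurable_times)
  have "norm (K y x * g y) \<le> norm \<bar>g y\<bar>" for y
    using Kb[of y x] by (auto simp: abs_mult intro!: mult_left_le_one_le)
  then show "AE y in \<nu>. norm (K y x * g y) \<le> norm \<bar>g y\<bar>" by (intro AE_I2)
qed

lemma LKT_bound: assumes "integrable \<nu> g" shows "\<bar>LKT K \<nu> g x\<bar> \<le> (\<integral>y. \<bar>g y\<bar> \<partial>\<nu>)"
proof -
  have "\<bar>LKT K \<nu> g x\<bar> \<le> (\<integral>y. \<bar>K y x * g y\<bar> \<partial>\<nu>)"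
    unfolding LKT_def by (rule integral_abs_bound)
  also have "\<dots> \<le> (\<integral>y. \<bar>g y\<bar> \<partial>\<nu>)"
  proof (rule integral_mono)
    show "integrable \<nu> (\<lambda>y. \<bar>K y x * g y\<bar>)" using LKT_int[OF assms] by auto
    show "integrable \<nu> (\<lambda>y. \<bar>g y\<bar>)" using assms by auto
    fix y show "\<bar>K y x * g y\<bar> \<le> \<bar>g y\<bar>"
      using Kb[of y x] by (auto simp: abs_mult intro!: mult_left_le_one_le)
  qed
  finally show ?thesis .
qed

lemma LKT_meas:
  assumes Sm: "sets \<mu> = sets borel" and g: "g \<in> borel_measurable \<nu>"
  shows "LKT K \<nu> g \<in> borel_measurable \<mu>"
proof -
  interpret prob_space \<nu> by (rule Pn)
  note Km[measurable]
  have gb[measurable]: "g \<in> borel_measurable borel" using g measurable_cong_sets[OF Sn refl] by blast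
  have "(\<lambda>(x, y). K y x * g y) \<in> borel_measurable (borel \<Otimes>\<^sub>M borel)" by measurable
  moreover have "sets (\<mu> \<Otimes>\<^sub>M \<nu>) = sets (borel \<Otimes>\<^sub>M borel)" using sets_pair_measure_cong[OF Sm Sn] .
  ultimately have "(\<lambda>(x, y). K y x * g y) \<in> borel_measurable (\<mu> \<Otimes>\<^sub>M \<nu>)"
    using measurable_cong_sets[of "\<mu> \<Otimes>\<^sub>M \<nu>" "borel \<Otimes>\<^sub>M borel" borel borel] by blast
  then have "(\<lambda>x. \<integral>y. K y x * g y \<partial>\<nu>) \<in> borel_measurable \<mu>"
    by (intro borel_measurable_lebesgue_integral) simp
  then show ?thesis unfolding LKT_def .
qed

lemma LKT_lin:
  assumes "integrable \<nu> g" "integrable \<nu> g'"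
  shows "LKT K \<nu> (\<lambda>y. g y - a * g' y) x = LKT K \<nu> g x - a * LKT K \<nu> g' x"
proof -
  have "(\<lambda>y. K y x * (g y - a * g' y)) = (\<lambda>y. K y x * g y - a * (K y x * g' y))"
    by (auto simp: algebra_simps)
  then show ?thesis unfolding LKT_def using LKT_int[OF assms(1)] LKT_int[OF assms(2)] by simp
qed

lemma LKT_lin2:
  assumes "integrable \<nu> g" "integrable \<nu> g'"
  shows "LKT K \<nu> (\<lambda>y. a * g' y - g y) x = a * LKT K \<nu> g' x - LKT K \<nu> g x"
proof -
  have "(\<lambda>y. K y x * (a * g' y - g y)) = (\<lambda>y. a * (K y x * g' y) - K y x * g y)"
    by (auto simp: algebra_simps)
  then show ?thesis unfolding LKT_def using LKT_int[OF assms(1)] LKT_int[OF assms(2)] by simp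
qed

lemma LKT_scale: "LKT K \<nu> (\<lambda>y. g y / c) x = LKT K \<nu> g x / c"
proof -
  have "(\<lambda>y. K y x * (g y / c)) = (\<lambda>y. K y x * g y / c)" by auto
  then show ?thesis unfolding LKT_def by simp
qed

lemma LKT_AE0: assumes "AE y in \<nu>. g y = 0" shows "LKT K \<nu> g x = 0"
  unfolding LKT_def using assms by (intro integral_eq_zero_AE) auto

end


theorem lemma4p3:
  fixes \<mu> \<nu> :: "'a::polish_space measure" and x0 :: 'a
    and m1 m2 :: real and K :: "'a \<Rightarrow> 'a \<Rightarrow> real"
    and \<alpha>1 \<alpha>1' \<alpha>2 \<alpha>2' :: "real \<Rightarrow> real"
  assumes "prob_space \<mu>" and "sets \<mu> = sets borel"
    and "prob_space \<nu>" and "sets \<nu> = sets borel"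
    and "0 < m1" and "m1 \<le> m2"
    and "(\<lambda>(x, y). K x y) \<in> borel_measurable (borel \<Otimes>\<^sub>M borel)"
    and "\<And>x y. 0 < K x y \<and> K x y \<le> 1"
    and "tail_fun \<alpha>1" and "tail_fun \<alpha>1'" and "tail_fun \<alpha>2" and "tail_fun \<alpha>2'"
    and "measure \<mu> (Bclosed x0 m1) > 0" and "measure \<nu> (Bclosed x0 m1) > 0"
    and "\<And>r. r > 0 \<Longrightarrow> \<alpha>1 r > 0" and "\<And>r. r > 0 \<Longrightarrow> \<alpha>2 r > 0"
    and "\<And>g. g \<in> nonzero \<nu> (Gcone x0 m1 m2 \<nu> \<alpha>2 \<alpha>2') \<Longrightarrow> (\<integral>x. g x \<partial>\<nu>) > 0"
    and "(INF f\<in>normed \<mu> (Fcone x0 m1 m2 \<mu> \<alpha>1 \<alpha>1').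
           INF g\<in>normed \<nu> (Gcone x0 m1 m2 \<nu> \<alpha>2 \<alpha>2').
             ereal (\<integral>x. LKT K \<nu> g x * f x \<partial>\<mu>)) > 0"
    and "(SUP f\<in>normed \<mu> (Fcone x0 m1 m2 \<mu> \<alpha>1 \<alpha>1').
           SUP g\<in>normed \<nu> (Gcone x0 m1 m2 \<nu> \<alpha>2 \<alpha>2').
             ereal (\<integral>x. LKT K \<nu> g x * f x \<partial>\<mu>)) < \<infinity>"
  shows "\<exists>\<kappa>::real. 0 < \<kappa> \<and> \<kappa> < 1
    \<and> (\<forall>g\<in>nonzero \<nu> (Gcone x0 m1 m2 \<nu> \<alpha>2 \<alpha>2'). LKT K \<nu> g \<in> Gcone x0 m1 m2 \<mu> \<alpha>1 \<alpha>1')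
    \<and> (\<forall>g\<in>nonzero \<nu> (Gcone x0 m1 m2 \<nu> \<alpha>2 \<alpha>2'). \<forall>g'\<in>nonzero \<nu> (Gcone x0 m1 m2 \<nu> \<alpha>2 \<alpha>2').
         hilbert_dist \<mu> (Gcone x0 m1 m2 \<mu> \<alpha>1 \<alpha>1') (LKT K \<nu> g) (LKT K \<nu> g')
           \<le> ereal \<kappa> * hilbert_dist \<nu> (Gcone x0 m1 m2 \<nu> \<alpha>2 \<alpha>2') g g')"
proof -
  interpret kn: kern \<nu> K by (rule kern.intro[OF assms(3) assms(4) assms(7) assms(8)])
  have Pm: "prob_space \<mu>" and Sm: "sets \<mu> = sets borel" and Pn: "prob_space \<nu>"
    and Sn: "sets \<nu> = sets borel" using assms(1) assms(2) assms(3) assms(4) by blast+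
  define Fm where "Fm = Fcone x0 m1 m2 \<mu> \<alpha>1 \<alpha>1'"
  define Gm where "Gm = Gcone x0 m1 m2 \<mu> \<alpha>1 \<alpha>1'"
  define Gn where "Gn = Gcone x0 m1 m2 \<nu> \<alpha>2 \<alpha>2'"
  define I where "I u = (\<integral>x. u x \<partial>\<nu>)" for u :: "'a \<Rightarrow> real"
  define P where "P f u = (\<integral>x. LKT K \<nu> u x * f x \<partial>\<mu>)" for f u :: "'a \<Rightarrow> real"
  have m2: "0 < m2" using assms(5,6) by linarith
  have hinf: "0 < (INF f\<in>normed \<mu> Fm. INF g\<in>normed \<nu> Gn. ereal (P f g))"
    using assms(18) unfolding Fm_def Gn_def P_def .
  have hsup: "(SUP f\<in>normed \<mu> Fm. SUP g\<in>normed \<nu> Gn. ereal (P f g)) < \<infinity>"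
    using assms(19) unfolding Fm_def Gn_def P_def .
  obtain c1 where c1p: "0 < ereal c1" and c1i: "ereal c1 < (INF f\<in>normed \<mu> Fm. INF g\<in>normed \<nu> Gn. ereal (P f g))"
    using ereal_dense2[OF hinf] by blast
  obtain c2' where c2i: "(SUP f\<in>normed \<mu> Fm. SUP g\<in>normed \<nu> Gn. ereal (P f g)) < ereal c2'"
    using ereal_dense2[OF hsup] by blast
  define c2 where "c2 = max c2' c1"
  have c1: "0 < c1" using c1p by simp
  have c12: "c1 \<le> c2" unfolding c2_def by simp
  have c1le: "c1 \<le> P f g" if "f \<in> normed \<mu> Fm" "g \<in> normed \<nu> Gn" for f g
  proof -
    have "(INF f\<in>normed \<mu> Fm. INF g\<in>normed \<nu> Gn. ereal (P f g)) \<le> (INF g\<in>normed \<nu> Gn. ereal (P f g))"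
      using that by (intro INF_lower)
    also have "\<dots> \<le> ereal (P f g)" using that by (intro INF_lower)
    finally have "ereal c1 < ereal (P f g)" using c1i by (meson order_less_le_trans)
    then show ?thesis by simp
  qed
  have c2le: "P f g \<le> c2" if "f \<in> normed \<mu> Fm" "g \<in> normed \<nu> Gn" for f g
  proof -
    have "ereal (P f g) \<le> (SUP g\<in>normed \<nu> Gn. ereal (P f g))" using that by (intro SUP_upper)
    also have "\<dots> \<le> (SUP f\<in>normed \<mu> Fm. SUP g\<in>normed \<nu> Gn. ereal (P f g))"
      using that by (intro SUP_upper)
    finally have "ereal (P f g) < ereal c2'" using c2i by (meson order_le_less_trans)
    then have "P f g < c2'" by simp
    then show ?thesis unfolding c2_def by simp
  qed
  have Gn_L2: "L2 \<nu> u" if "u \<in> Gn" for u using that unfolding Gn_def Gcone_def by auto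
  have Gn_int: "integrable \<nu> u" if "u \<in> Gn" for u using L2_integrable[OF Pn Gn_L2[OF that]] .
  have Gn_meas: "u \<in> borel_measurable \<nu>" if "u \<in> Gn" for u using Gn_int[OF that] by auto
  have Gn_I: "0 \<le> I u \<and> (I u = 0 \<longrightarrow> (AE x in \<nu>. u x = 0))" if u: "u \<in> Gn" for u
  proof (cases "AE x in \<nu>. u x = 0")
    case True
    then have "I u = 0" unfolding I_def by (intro integral_eq_zero_AE)
    then show ?thesis using True by simp
  next
    case False
    then have "u \<in> nonzero \<nu> Gn" using u unfolding nonzero_def by auto
    then have "I u > 0" using assms(17) unfolding I_def Gn_def by auto
    then show ?thesis by simp
  qed
  have Fm_nn: "0 \<le> (\<integral>x. f x \<partial>\<mu>)" if "f \<in> Fm" for f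
    using Fcone_nonneg(1)[OF Pm Sm assms(10) m2] that unfolding Fm_def by blast
  have Fm_0: "AE x in \<mu>. f x = 0" if "f \<in> Fm" "(\<integral>x. f x \<partial>\<mu>) = 0" for f
    using Fcone_nonneg(2)[OF Pm Sm assms(10) m2] that unfolding Fm_def by blast
  have Fm_int: "integrable \<mu> f" if "f \<in> Fm" for f
    using L2_integrable[OF Pm] that unfolding Fm_def Fcone_def by auto
  have KL: "c1 * I u * (\<integral>x. f x \<partial>\<mu>) \<le> P f u \<and> P f u \<le> c2 * I u * (\<integral>x. f x \<partial>\<mu>)"
    if u: "u \<in> Gn" and f: "f \<in> Fm" for u f
  proof (cases "AE x in \<nu>. u x = 0")
    case True
    then have "LKT K \<nu> u x = 0" for x by (rule kn.LKT_AE0)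
    then have "P f u = 0" unfolding P_def by simp
    moreover have "I u = 0" unfolding I_def using True by (intro integral_eq_zero_AE)
    ultimately show ?thesis by simp
  next
    case nz: False
    show ?thesis
    proof (cases "(\<integral>x. f x \<partial>\<mu>) = 0")
      case True
      then have "AE x in \<mu>. f x = 0" using Fm_0 f by blast
      then have "AE x in \<mu>. LKT K \<nu> u x * f x = 0" by eventually_elim simp
      then have "P f u = 0" unfolding P_def by (intro integral_eq_zero_AE)
      then show ?thesis using True by simp
    next
      case False
      define s where "s = (\<integral>x. f x \<partial>\<mu>)"
      have sp: "0 < s" using False Fm_nn[OF f] unfolding s_def by auto
      have Ip: "0 < I u" using Gn_I[OF u] nz by force
      define u' where "u' = (\<lambda>y. u y / I u)"
      define f' where "f' = (\<lambda>x. f x / s)"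
      have "(\<lambda>x. (1 / I u) * u x) \<in> Gn" using Gcone_scale[of "1 / I u" u] u Ip unfolding Gn_def by auto
      moreover have "(\<lambda>x. (1 / I u) * u x) = u'" unfolding u'_def by auto
      ultimately have u'G: "u' \<in> Gn" by simp
      have "I u' = 1" unfolding u'_def I_def using Ip by (simp add: I_def)
      then have u'n: "u' \<in> normed \<nu> Gn" using u'G unfolding normed_def I_def by auto
      have "(\<lambda>x. (1 / s) * f x) \<in> Fm" using Fcone_scale[of "1 / s" f] f sp unfolding Fm_def by auto
      moreover have "(\<lambda>x. (1 / s) * f x) = f'" unfolding f'_def by auto
      ultimately have f'F: "f' \<in> Fm" by simp
      have "(\<integral>x. f' x \<partial>\<mu>) = 1" unfolding f'_def using sp by (simp add: s_def)
      then have f'n: "f' \<in> normed \<mu> Fm" using f'F unfolding normed_def by auto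
      have eqV: "P f' u' = P f u / (I u * s)"
      proof -
        have "(\<lambda>x. LKT K \<nu> u' x * f' x) = (\<lambda>x. (LKT K \<nu> u x * f x) / (I u * s))"
          unfolding u'_def f'_def kn.LKT_scale by auto
        then show ?thesis unfolding P_def by simp
      qed
      have "c1 \<le> P f u / (I u * s)" using c1le[OF f'n u'n] unfolding eqV .
      then have lo: "c1 * (I u * s) \<le> P f u" using Ip sp by (simp add: le_divide_eq)
      have "P f u / (I u * s) \<le> c2" using c2le[OF f'n u'n] unfolding eqV .
      then have hi: "P f u \<le> c2 * (I u * s)" using Ip sp by (simp add: divide_le_eq)
      show ?thesis using lo hi unfolding s_def by (simp add: mult.assoc)
    qed
  qed
  have Lmeas: "LKT K \<nu> u \<in> borel_measurable \<mu>" if "u \<in> Gn" for u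
    using kn.LKT_meas[OF Sm Gn_meas[OF that]] .
  define N where "N u = (\<integral>y. \<bar>u y\<bar> \<partial>\<nu>)" for u :: "'a \<Rightarrow> real"
  have Lbd: "\<bar>LKT K \<nu> u x\<bar> \<le> N u" if "u \<in> Gn" for u x
    using kn.LKT_bound[OF Gn_int[OF that]] unfolding N_def .
  have N0: "0 \<le> N u" for u unfolding N_def by (intro integral_nonneg_AE) auto
  have Lcomb: "L2 \<mu> (\<lambda>x. a * LKT K \<nu> u x + b * LKT K \<nu> u' x)" if u: "u \<in> Gn" and u': "u' \<in> Gn" for a b u u'
  proof (rule L2_bounded[OF Pm, where C="\<bar>a\<bar> * N u + \<bar>b\<bar> * N u'"])
    have [measurable]: "LKT K \<nu> u \<in> borel_measurable \<mu>" "LKT K \<nu> u' \<in> borel_measurable \<mu>"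
      using Lmeas u u' by auto
    show "(\<lambda>x. a * LKT K \<nu> u x + b * LKT K \<nu> u' x) \<in> borel_measurable \<mu>" by measurable
    fix x
    have "\<bar>a * LKT K \<nu> u x + b * LKT K \<nu> u' x\<bar> \<le> \<bar>a\<bar> * \<bar>LKT K \<nu> u x\<bar> + \<bar>b\<bar> * \<bar>LKT K \<nu> u' x\<bar>"
      by (metis abs_mult abs_triangle_ineq)
    also have "\<dots> \<le> \<bar>a\<bar> * N u + \<bar>b\<bar> * N u'"
      using Lbd[OF u, of x] Lbd[OF u', of x] by (intro add_mono mult_left_mono) auto
    finally show "\<bar>a * LKT K \<nu> u x + b * LKT K \<nu> u' x\<bar> \<le> \<bar>a\<bar> * N u + \<bar>b\<bar> * N u'" .
  qed
  have Pint: "integrable \<mu> (\<lambda>x. LKT K \<nu> u x * f x)" if u: "u \<in> Gn" and f: "f \<in> Fm" for u f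
  proof (rule Bochner_Integration.integrable_bound[where f="\<lambda>x. N u * f x"])
    show "integrable \<mu> (\<lambda>x. N u * f x)" using Fm_int[OF f] by auto
    have [measurable]: "LKT K \<nu> u \<in> borel_measurable \<mu>" "f \<in> borel_measurable \<mu>"
      using Lmeas[OF u] Fm_int[OF f] by auto
    show "(\<lambda>x. LKT K \<nu> u x * f x) \<in> borel_measurable \<mu>" by measurable
    have "norm (LKT K \<nu> u x * f x) \<le> norm (N u * f x)" for x
      using Lbd[OF u, of x] N0[of u] by (auto simp: abs_mult intro!: mult_right_mono)
    then show "AE x in \<mu>. norm (LKT K \<nu> u x * f x) \<le> norm (N u * f x)" by (intro AE_I2)
  qed
  have pair: "(\<integral>x. f x * (a * LKT K \<nu> u x + b * LKT K \<nu> u' x) \<partial>\<mu>) = a * P f u + b * P f u'"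
    if u: "u \<in> Gn" and u': "u' \<in> Gn" and f: "f \<in> Fm" for a b u u' f
  proof -
    have "(\<lambda>x. f x * (a * LKT K \<nu> u x + b * LKT K \<nu> u' x))
        = (\<lambda>x. a * (LKT K \<nu> u x * f x) + b * (LKT K \<nu> u' x * f x))" by (auto simp: algebra_simps)
    then show ?thesis using Pint[OF u f] Pint[OF u' f] unfolding P_def by simp
  qed
  have Gm_mem: "(\<lambda>x. a * LKT K \<nu> u x + b * LKT K \<nu> u' x) \<in> Gm"
    if u: "u \<in> Gn" and u': "u' \<in> Gn" and nn: "\<And>f. f \<in> Fm \<Longrightarrow> 0 \<le> a * P f u + b * P f u'" for a b u u'
    unfolding Gm_def Gcone_def using Lcomb[OF u u'] pair[OF u u'] nn unfolding Fm_def by auto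
  have Gm_pos: "0 \<le> a * P f u + b * P f u'"
    if u: "u \<in> Gn" and u': "u' \<in> Gn" and f: "f \<in> Fm" and m: "(\<lambda>x. a * LKT K \<nu> u x + b * LKT K \<nu> u' x) \<in> Gm" for a b u u' f
    using m f pair[OF u u' f] unfolding Gm_def Gcone_def Fm_def by auto
  have conc2: "LKT K \<nu> g \<in> Gm" if g: "g \<in> nonzero \<nu> Gn" for g
  proof -
    have gG: "g \<in> Gn" using g unfolding nonzero_def by auto
    have "(\<lambda>x. 1 * LKT K \<nu> g x + 0 * LKT K \<nu> g x) \<in> Gm"
    proof (rule Gm_mem[OF gG gG])
      fix f assume f: "f \<in> Fm"
      have "0 \<le> c1 * I g * (\<integral>x. f x \<partial>\<mu>)" using c1 Gn_I[OF gG] Fm_nn[OF f] by auto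
      then show "0 \<le> 1 * P f g + 0 * P f g" using KL[OF gG f] by linarith
    qed
    then show ?thesis by simp
  qed
  define B1 where "B1 = Bclosed x0 m1"
  define mB where "mB = measure \<mu> B1"
  have mB: "0 < mB" using assms(13) unfolding mB_def B1_def .
  have B1S[measurable]: "B1 \<in> sets \<mu>" unfolding B1_def by (rule Bclosed_sets[OF Sm])
  have spm: "space \<mu> = UNIV" using sets_eq_imp_space_eq[OF Sm] by simp
  define f0 where "f0 x = indicator B1 x / mB" for x
  have f0nn: "0 \<le> f0 x" for x unfolding f0_def using mB by auto
  have f0int: "(\<integral>x. f0 x \<partial>\<mu>) = 1"
  proof -
    have "(\<integral>x. f0 x \<partial>\<mu>) = (\<integral>x. indicator B1 x \<partial>\<mu>) / mB" unfolding f0_def by simp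
    also have "(\<integral>x. indicator B1 x \<partial>\<mu>) = mB" unfolding mB_def using spm by simp
    finally show ?thesis using mB by simp
  qed
  have f0F: "f0 \<in> Fm" unfolding Fm_def Fcone_def
  proof (intro CollectI conjI allI impI)
    show "L2 \<mu> f0"
    proof (rule L2_bounded[OF Pm, where C="1 / mB"])
      show "f0 \<in> borel_measurable \<mu>" unfolding f0_def by measurable
      fix x show "\<bar>f0 x\<bar> \<le> 1 / mB" unfolding f0_def using mB by (auto split: split_indicator)
    qed
    show "AE x in \<mu>. x \<in> Bclosed x0 m2 \<longrightarrow> 0 \<le> f0 x" using f0nn by auto
  next
    fix r :: real assume r: "m1 \<le> r"
    have z: "indicator (space \<mu> - Bclosed x0 r) x *\<^sub>R max (f0 x) 0 = 0" for x
      using r unfolding f0_def B1_def Bclosed_def by (auto split: split_indicator)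
    have "0 \<le> \<alpha>1 r" using assms(9) r assms(5) unfolding tail_fun_def by auto
    then show "(\<integral>x\<in>(space \<mu> - Bclosed x0 r). max (f0 x) 0 \<partial>\<mu>) \<le> \<alpha>1 r * (\<integral>x. f0 x \<partial>\<mu>)"
      unfolding set_lebesgue_integral_def z f0int by simp
  next
    fix r :: real assume r: "m2 \<le> r"
    have z: "indicator (space \<mu> - Bclosed x0 r) x *\<^sub>R max (- f0 x) 0 = 0" for x
      using f0nn[of x] by auto
    have "0 \<le> \<alpha>1' r" using assms(10) r m2 unfolding tail_fun_def by auto
    then show "(\<integral>x\<in>(space \<mu> - Bclosed x0 r). max (- f0 x) 0 \<partial>\<mu>) \<le> \<alpha>1' r * (\<integral>x. f0 x \<partial>\<mu>)"
      unfolding set_lebesgue_integral_def z f0int by simp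
  qed
  have q0: "0 < P f0 g'" "0 < I g'" if g': "g' \<in> nonzero \<nu> Gn" for g'
  proof -
    have g'G: "g' \<in> Gn" using g' unfolding nonzero_def by auto
    show I: "0 < I g'" using assms(17) g' unfolding I_def Gn_def by auto
    have "c1 * I g' * 1 \<le> P f0 g'" using KL[OF g'G f0F] f0int by simp
    moreover have "0 < c1 * I g' * 1" using c1 I by simp
    ultimately show "0 < P f0 g'" by linarith
  qed
  define \<kappa> where "\<kappa> = 1 - c1\<^sup>2/(2*c2\<^sup>2)"
  have c2p: "0 < c2" using c1 c12 by linarith
  have "c1\<^sup>2 \<le> c2\<^sup>2" using c1 c12 by (intro power_mono) auto
  then have "c1\<^sup>2/(2*c2\<^sup>2) \<le> 1/2" using c2p by (simp add: field_simps)
  moreover have "0 < c1\<^sup>2/(2*c2\<^sup>2)" using c1 c2p by simp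
  ultimately have kap: "0 < \<kappa>" "\<kappa> < 1" unfolding \<kappa>_def by linarith+
  have main: "hilbert_dist \<mu> Gm (LKT K \<nu> g) (LKT K \<nu> g') \<le> ereal \<kappa> * hilbert_dist \<nu> Gn g g'"
    if g: "g \<in> nonzero \<nu> Gn" and g': "g' \<in> nonzero \<nu> Gn" for g g'
  proof (cases "cone_equiv Gn g g'")
    case False
    then have "hilbert_dist \<nu> Gn g g' = \<infinity>" unfolding hilbert_dist_def by simp
    then show ?thesis using kap by simp
  next
    case True
    have gG: "g \<in> Gn" and g'G: "g' \<in> Gn" using g g' unfolding nonzero_def by auto
    have g'nz: "\<not> (AE x in \<nu>. g' x = 0)" using g' unfolding nonzero_def by auto
    have Ig': "0 < I g'" and q0p: "0 < P f0 g'" using q0[OF g'] by auto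
    define h where "h = LKT K \<nu> g"
    define h' where "h' = LKT K \<nu> g'"
    define A where "A = {b. b > 0 \<and> (\<lambda>x. b * g' x - g x) \<in> Gn}"
    define B where "B = {a. a > 0 \<and> (\<lambda>x. g x - a * g' x) \<in> Gn}"
    obtain b0 b0' where b0: "b0 > 0" "b0' > 0" "(\<lambda>x. b0 * g' x - g x) \<in> Gn" "(\<lambda>x. b0' * g x - g' x) \<in> Gn"
      using True unfolding cone_equiv_def cone_le_def by blast
    have b0A: "b0 \<in> A" unfolding A_def using b0 by auto
    have a0B: "1/b0' \<in> B"
    proof -
      have "(\<lambda>x. (1/b0') * (b0' * g x - g' x)) \<in> Gn"
        using Gcone_scale[of "1/b0'" "\<lambda>x. b0' * g x - g' x"] b0 unfolding Gn_def by auto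
      moreover have "(\<lambda>x. (1/b0') * (b0' * g x - g' x)) = (\<lambda>x. g x - (1/b0') * g' x)"
        using b0 by (auto simp: field_simps)
      ultimately show ?thesis unfolding B_def using b0 by auto
    qed
    have Ilin1: "I (\<lambda>x. g x - a * g' x) = I g - a * I g'" for a
      unfolding I_def using Gn_int[OF gG] Gn_int[OF g'G] by simp
    have Ilin2: "I (\<lambda>x. b * g' x - g x) = b * I g' - I g" for b
      unfolding I_def using Gn_int[OF gG] Gn_int[OF g'G] by simp
    have ab: "a \<le> b" if "a \<in> B" "b \<in> A" for a b
    proof -
      have "0 \<le> I g - a * I g'" using Gn_I[of "\<lambda>x. g x - a * g' x"] that(1) Ilin1 unfolding B_def by auto
      moreover have "0 \<le> b * I g' - I g" using Gn_I[of "\<lambda>x. b * g' x - g x"] that(2) Ilin2 unfolding A_def by auto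
      ultimately have "0 \<le> (b - a) * I g'" by (simp add: algebra_simps)
      then show ?thesis using Ig' by (simp add: zero_le_mult_iff)
    qed
    define D where "D = ln (hM Gm h h' / hm Gm h h')"
    have key: "cone_equiv Gm h h' \<and> \<not> (AE x in \<mu>. h' x = 0) \<and> D \<le> \<kappa> * (ln b - ln a)"
      if aB: "a \<in> B" and bA: "b \<in> A" for a b
    proof -
      have a0: "0 < a" and uG: "(\<lambda>x. g x - a * g' x) \<in> Gn" using aB unfolding B_def by auto
      have vG: "(\<lambda>x. b * g' x - g x) \<in> Gn" using bA unfolding A_def by auto
      have aleb: "a \<le> b" using ab[OF aB bA] .
      define t where "t = I g - a * I g'"
      define w where "w = b * I g' - I g"
      have t0: "0 \<le> t" using Gn_I[OF uG] Ilin1 unfolding t_def by auto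
      have w0: "0 \<le> w" using Gn_I[OF vG] Ilin2 unfolding w_def by auto
      have tw: "t + w = (b - a) * I g'" unfolding t_def w_def by (simp add: algebra_simps)
      have Pu: "P f (\<lambda>x. g x - a * g' x) = P f g - a * P f g'" if f: "f \<in> Fm" for f
      proof -
        have "(\<lambda>x. LKT K \<nu> (\<lambda>y. g y - a * g' y) x * f x) = (\<lambda>x. LKT K \<nu> g x * f x - a * (LKT K \<nu> g' x * f x))"
          unfolding kn.LKT_lin[OF Gn_int[OF gG] Gn_int[OF g'G]] by (simp add: algebra_simps)
        then show ?thesis unfolding P_def using Pint[OF gG f] Pint[OF g'G f] by simp
      qed
      have Pv: "P f (\<lambda>x. b * g' x - g x) = b * P f g' - P f g" if f: "f \<in> Fm" for f
      proof -
        have "(\<lambda>x. LKT K \<nu> (\<lambda>y. b * g' y - g y) x * f x) = (\<lambda>x. b * (LKT K \<nu> g' x * f x) - LKT K \<nu> g x * f x)"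
          unfolding kn.LKT_lin2[OF Gn_int[OF gG] Gn_int[OF g'G]] by (simp add: algebra_simps)
        then show ?thesis unfolding P_def using Pint[OF gG f] Pint[OF g'G f] by simp
      qed
      have KLu: "c1 * t * (\<integral>x. f x \<partial>\<mu>) \<le> P f g - a * P f g' \<and> P f g - a * P f g' \<le> c2 * t * (\<integral>x. f x \<partial>\<mu>)"
        if f: "f \<in> Fm" for f
        using KL[OF uG f] Pu[OF f] Ilin1 unfolding t_def by simp
      have KLv: "c1 * w * (\<integral>x. f x \<partial>\<mu>) \<le> b * P f g' - P f g \<and> b * P f g' - P f g \<le> c2 * w * (\<integral>x. f x \<partial>\<mu>)"
        if f: "f \<in> Fm" for f
        using KL[OF vG f] Pv[OF f] Ilin2 unfolding w_def by simp
      define al where "al = (if a = b then a else (a*c2*w + b*c1*t)/(c2*w + c1*t))"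
      define be where "be = (if a = b then a else (a*c1*w + b*c2*t)/(c1*w + c2*t))"
      have twp: "0 < t + w" if "a \<noteq> b" using tw Ig' aleb that by simp
      have D1: "0 < c2*w + c1*t" if "a \<noteq> b"
      proof -
        have "0 < min c1 c2 * (t + w)" using c1 c2p twp[OF that] by simp
        also have "\<dots> \<le> c2*w + c1*t"
        proof -
          have "min c1 c2 * t \<le> c1 * t" "min c1 c2 * t \<le> c2 * t" "min c1 c2 * w \<le> c1 * w" "min c1 c2 * w \<le> c2 * w"
            using t0 w0 by (simp_all add: mult_right_mono)
          then show ?thesis by (simp add: distrib_left)
        qed
        finally show ?thesis .
      qed
      have D2: "0 < c1*w + c2*t" if "a \<noteq> b"
      proof -
        have "0 < min c1 c2 * (t + w)" using c1 c2p twp[OF that] by simp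
        also have "\<dots> \<le> c1*w + c2*t"
        proof -
          have "min c1 c2 * t \<le> c1 * t" "min c1 c2 * t \<le> c2 * t" "min c1 c2 * w \<le> c1 * w" "min c1 c2 * w \<le> c2 * w"
            using t0 w0 by (simp_all add: mult_right_mono)
          then show ?thesis by (simp add: distrib_left)
        qed
        finally show ?thesis .
      qed
      have ineq: "al * P f g' \<le> P f g \<and> P f g \<le> be * P f g'" if f: "f \<in> Fm" for f
      proof (cases "a = b")
        case True
        then have "t + w = 0" using tw by simp
        then have "t = 0" "w = 0" using t0 w0 by auto
        then have "P f g = a * P f g'" using KLu[OF f] by auto
        then show ?thesis unfolding al_def be_def using True by simp
      next
        case False
        define p where "p = P f g"
        define q where "q = P f g'"
        define s where "s = (\<integral>x. f x \<partial>\<mu>)"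
        have s0: "0 \<le> s" using Fm_nn[OF f] unfolding s_def .
        have u1: "c1 * t * s \<le> p - a * q" and u2: "p - a * q \<le> c2 * t * s"
          using KLu[OF f] unfolding p_def q_def s_def by auto
        have v1: "c1 * w * s \<le> b * q - p" and v2: "b * q - p \<le> c2 * w * s"
          using KLv[OF f] unfolding p_def q_def s_def by auto
        have l1: "c1 * t * (b * q - p) \<le> (p - a * q) * (c2 * w)"
        proof -
          have "c1 * t * (b * q - p) \<le> c1 * t * (c2 * w * s)" using v2 c1 t0 by (intro mult_left_mono) auto
          also have "\<dots> = (c1 * t * s) * (c2 * w)" by (simp add: algebra_simps)
          also have "\<dots> \<le> (p - a * q) * (c2 * w)" using u1 c2p w0 by (intro mult_right_mono) auto
          finally show ?thesis .
        qed
        have l2: "(p - a * q) * (c1 * w) \<le> c2 * t * (b * q - p)"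
        proof -
          have "(p - a * q) * (c1 * w) \<le> (c2 * t * s) * (c1 * w)" using u2 c1 w0 by (intro mult_right_mono) auto
          also have "\<dots> = c2 * t * (c1 * w * s)" by (simp add: algebra_simps)
          also have "\<dots> \<le> c2 * t * (b * q - p)" using v1 c2p t0 by (intro mult_left_mono) auto
          finally show ?thesis .
        qed
        have e1: "p * (c2*w + c1*t) - (a*c2*w + b*c1*t) * q = (p - a * q) * (c2 * w) - c1 * t * (b * q - p)"
          by (simp add: algebra_simps)
        have e2: "(a*c1*w + b*c2*t) * q - p * (c1*w + c2*t) = c2 * t * (b * q - p) - (p - a * q) * (c1 * w)"
          by (simp add: algebra_simps)
        have "(a*c2*w + b*c1*t) * q \<le> p * (c2*w + c1*t)" using l1 e1 by linarith
        then have r1: "(a*c2*w + b*c1*t) / (c2*w + c1*t) * q \<le> p"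
          using D1[OF False] by (simp add: pos_divide_le_eq mult.commute mult.left_commute)
        have "p * (c1*w + c2*t) \<le> (a*c1*w + b*c2*t) * q" using l2 e2 by linarith
        then have r2: "p \<le> (a*c1*w + b*c2*t) / (c1*w + c2*t) * q"
          using D2[OF False] by (simp add: pos_le_divide_eq mult.commute mult.left_commute)
        show ?thesis unfolding al_def be_def p_def[symmetric] q_def[symmetric] using False r1 r2 by simp
      qed
      have al_ge: "a \<le> al"
      proof (cases "a = b")
        case False
        have "a * (c2*w + c1*t) \<le> a*c2*w + b*c1*t"
          using aleb c1 t0 by (simp add: distrib_left mult_right_mono mult.assoc)
        then show ?thesis unfolding al_def using False D1[OF False] by (simp add: pos_le_divide_eq)
      qed (simp add: al_def)
      have be_ge: "a \<le> be"
      proof (cases "a = b")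
        case False
        have "a * (c1*w + c2*t) \<le> a*c1*w + b*c2*t"
          using aleb c2p t0 by (simp add: distrib_left mult_right_mono mult.assoc)
        then show ?thesis unfolding be_def using False D2[OF False] by (simp add: pos_le_divide_eq)
      qed (simp add: be_def)
      have al0: "0 < al" and be0: "0 < be" using al_ge be_ge a0 by auto
      have hbe: "(\<lambda>x. be * h' x - h x) \<in> Gm"
      proof -
        have "(\<lambda>x. be * LKT K \<nu> g' x + (-1) * LKT K \<nu> g x) \<in> Gm"
          by (rule Gm_mem[OF g'G gG]) (use ineq in auto)
        then show ?thesis unfolding h_def h'_def by simp
      qed
      have hal: "(\<lambda>x. h x - al * h' x) \<in> Gm"
      proof -
        have "(\<lambda>x. 1 * LKT K \<nu> g x + (- al) * LKT K \<nu> g' x) \<in> Gm"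
          by (rule Gm_mem[OF gG g'G]) (use ineq in auto)
        then show ?thesis unfolding h_def h'_def by simp
      qed
      define SM where "SM = {b. b > 0 \<and> (\<lambda>x. b * h' x - h x) \<in> Gm}"
      define Sa where "Sa = {a. a > 0 \<and> (\<lambda>x. h x - a * h' x) \<in> Gm}"
      have hMe: "hM Gm h h' = Inf SM" unfolding hM_def SM_def ..
      have hme: "hm Gm h h' = Sup Sa" unfolding hm_def Sa_def ..
      define p0 where "p0 = P f0 g"
      define q0 where "q0 = P f0 g'"
      have q0p': "0 < q0" using q0p unfolding q0_def .
      have SMlow: "p0 / q0 \<le> y" if "y \<in> SM" for y
      proof -
        have "(\<lambda>x. y * LKT K \<nu> g' x + (-1) * LKT K \<nu> g x) \<in> Gm"
          using that unfolding SM_def h_def h'_def by simp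
        from Gm_pos[OF g'G gG f0F this] have "p0 \<le> y * q0" unfolding p0_def q0_def by simp
        then show ?thesis using q0p' by (simp add: pos_divide_le_eq)
      qed
      have Saup: "y \<le> p0 / q0" if "y \<in> Sa" for y
      proof -
        have "(\<lambda>x. 1 * LKT K \<nu> g x + (- y) * LKT K \<nu> g' x) \<in> Gm"
          using that unfolding Sa_def h_def h'_def by simp
        from Gm_pos[OF gG g'G f0F this] have "y * q0 \<le> p0" unfolding p0_def q0_def by simp
        then show ?thesis using q0p' by (simp add: pos_le_divide_eq)
      qed
      have al_le: "al \<le> p0 / q0" using ineq[OF f0F] q0p' unfolding p0_def[symmetric] q0_def[symmetric]
        by (simp add: pos_le_divide_eq)
      have beSM: "be \<in> SM" unfolding SM_def using be0 hbe by simp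
      have alSa: "al \<in> Sa" unfolding Sa_def using al0 hal by simp
      have hm_ge: "al \<le> hm Gm h h'" unfolding hme
        by (rule cSup_upper[OF alSa]) (use Saup in \<open>auto simp: bdd_above_def\<close>)
      have hM_le: "hM Gm h h' \<le> be" unfolding hMe
        by (rule cInf_lower[OF beSM]) (auto simp: bdd_below_def SM_def intro!: exI[of _ 0])
      have hM_ge: "p0 / q0 \<le> hM Gm h h'" unfolding hMe
        by (rule cInf_greatest) (use beSM SMlow in auto)
      have hMp: "0 < hM Gm h h'" using hM_ge al_le al0 by linarith
      have hmp: "0 < hm Gm h h'" using hm_ge al0 by linarith
      have "hM Gm h h' / hm Gm h h' \<le> be / al"
        by (rule frac_le) (use be0 hM_le al0 hm_ge in auto)
      then have "D \<le> ln (be / al)" unfolding D_def using hMp hmp al0 be0 by simp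
      also have "\<dots> = ln be - ln al" using al0 be0 by (simp add: ln_div)
      also have "\<dots> \<le> \<kappa> * (ln b - ln a)"
      proof (cases "a = b")
        case True
        then show ?thesis unfolding al_def be_def by simp
      next
        case False
        show ?thesis unfolding al_def be_def \<kappa>_def using False
          birk_ineq[OF c1 c12 t0 w0 twp[OF False] a0 aleb] by simp
      qed
      finally have Dle: "D \<le> \<kappa> * (ln b - ln a)" .
      have ce: "cone_equiv Gm h h'" unfolding cone_equiv_def cone_le_def
      proof (intro exI conjI)
        show "0 < be" "0 < 1 / al" using be0 al0 by auto
        show "(\<lambda>x. be * h' x - h x) \<in> Gm" using hbe .
        have "(\<lambda>x. (1 / al) * (h x - al * h' x)) \<in> Gm"
          using Gcone_scale[of "1 / al" "\<lambda>x. h x - al * h' x"] hal al0 unfolding Gm_def by auto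
        moreover have "(\<lambda>x. (1 / al) * (h x - al * h' x)) = (\<lambda>x. 1 / al * h x - h' x)"
          using al0 by (auto simp: field_simps)
        ultimately show "(\<lambda>x. 1 / al * h x - h' x) \<in> Gm" by simp
      qed
      have nz: "\<not> (AE x in \<mu>. h' x = 0)"
      proof
        assume "AE x in \<mu>. h' x = 0"
        then have "AE x in \<mu>. LKT K \<nu> g' x * f0 x = 0" unfolding h'_def by eventually_elim simp
        then have "q0 = 0" unfolding q0_def P_def by (intro integral_eq_zero_AE)
        then show False using q0p' by simp
      qed
      show ?thesis using ce nz Dle by blast
    qed
    have k0: "cone_equiv Gm h h'" "\<not> (AE x in \<mu>. h' x = 0)" using key[OF a0B b0A] by auto
    have hdm: "hilbert_dist \<mu> Gm h h' = ereal D" unfolding hilbert_dist_def D_def using k0 by simp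
    define M where "M = Inf A"
    define m where "m = Sup B"
    have hdn: "hilbert_dist \<nu> Gn g g' = ereal (ln (M / m))"
      unfolding hilbert_dist_def hM_def hm_def M_def m_def A_def B_def using True g'nz by simp
    have Ane: "A \<noteq> {}" using b0A by auto
    have Bne: "B \<noteq> {}" using a0B by auto
    have bddB: "bdd_above B" unfolding bdd_above_def using ab b0A by blast
    have a0p: "0 < 1 / b0'" using b0 by simp
    have m0: "0 < m"
    proof -
      have "1 / b0' \<le> m" unfolding m_def by (rule cSup_upper[OF a0B bddB])
      then show ?thesis using a0p by linarith
    qed
    define e where "e = exp (D / \<kappa>)"
    have e0: "0 < e" unfolding e_def by simp
    have e1: "e * a \<le> b" if aB: "a \<in> B" and bA: "b \<in> A" for a b
    proof -
      have ap: "0 < a" using aB unfolding B_def by auto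
      have bp: "0 < b" using bA unfolding A_def by auto
      have "D \<le> \<kappa> * (ln b - ln a)" using key[OF aB bA] by blast
      then have "D / \<kappa> \<le> ln b - ln a" using kap by (simp add: pos_divide_le_eq mult.commute)
      then have "e \<le> exp (ln b - ln a)" unfolding e_def by simp
      also have "\<dots> = b / a" using ap bp by (simp add: exp_diff)
      finally show ?thesis using ap by (simp add: pos_le_divide_eq)
    qed
    have e3: "a \<le> M / e" if aB: "a \<in> B" for a
    proof -
      have "e * a \<le> M" unfolding M_def by (rule cInf_greatest[OF Ane]) (rule e1[OF aB])
      then show ?thesis using e0 by (simp add: pos_le_divide_eq mult.commute)
    qed
    have "m \<le> M / e" unfolding m_def by (rule cSup_least[OF Bne]) (rule e3)
    then have "e \<le> M / m" using e0 m0 by (simp add: pos_le_divide_eq mult.commute)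
    then have "ln e \<le> ln (M / m)" using e0 by simp
    then have "D / \<kappa> \<le> ln (M / m)" unfolding e_def by simp
    then have "D \<le> \<kappa> * ln (M / m)" using kap by (simp add: pos_divide_le_eq mult.commute)
    then show ?thesis unfolding h_def[symmetric] h'_def[symmetric] hdm hdn by simp
  qed
  show ?thesis
    using kap conc2 main unfolding Gn_def Gm_def by blast
qed

end
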